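(* Let $m\ge1$, $\lambda=(\lambda_1,\dots,\lambda_m)$ with nonzero real $\lambda_j$, and let $\mathfrak{g}_m(\lambda)$ be the oscillator algebra with basis $P,X_1,\dots,X_m,Y_1,\dots,Y_m,Q$ and the only nonzero brackets $[X_i,Y_j]=\delta_{ij}P$, $[Q,X_j]=\lambda_jY_j$, $[Q,Y_j]=-\lambda_jX_j$; let $G_m(\lambda)$ be the corresponding simply connected oscillator group. For $\varepsilon\in\mathbb{R}$ let $g_\varepsilon$ be the left-invariant metric with $g_\varepsilon(P,P)=g_\varepsilon(Q,Q)=\varepsilon$, $g_\varepsilon(P,Q)=1$, $g_\varepsilon(X_i,X_j)=g_\varepsilon(Y_i,Y_j)=\delta_{ij}$, and all other pairings of basis vectors zero. Every derivation $D$ of $\mathfrak{g}_m(\lambda)$ is written as $DP=\alpha P$, $DX_j=a_jP+\sum_l b^l_jX_l+\sum_l c^l_jY_l$, $DY_j=\tilde a_jP+\sum_l B^l_jX_l+\sum_l C^l_jY_l$, $DQ=\mu P-\sum_l\lambda_la_lX_l-\sum_l\lambda_l\tilde a_lY_l$ with real coefficients. Suppose $g_\varepsilon$ satisfies the solvsoliton equation $\mathrm{ric}=c\,\mathrm{Id}+D$ for some $c\in\mathbb{R}$ and some derivation $D$ of $\mathfrak{g}_m(\lambda)$. Then $\varepsilon=c=0$, $\mu=m/2$, and $\alpha=a_j=\tilde a_j=b^i_j=c^i_j=0$ for all $i,j$. Consequently the left-invariant Lorentzian metric $g_0$ is a steady solvsoliton (i.e. a solvsoliton with $c=0$).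
   Context: $\mathrm{ric}$ is the Ricci operator of $g_\varepsilon$, defined by $g_\varepsilon(\mathrm{ric}X,Y)=\mathrm{Ric}(X,Y)$. A left-invariant pseudo-Riemannian metric on a simply connected solvable Lie group is a solvsoliton if $\mathrm{ric}=c\,\mathrm{Id}+D$ for some $c\in\mathbb{R}$ and some derivation $D$ of the Lie algebra; it is called steady if $c=0$. *)

theory Defs
  imports Complex_Main
begin

text \<open>A Lie algebra is given by a finite index set I of basis vectors, and structure
constants br a b k (the e_k-coefficient of [e_a, e_b]).  Vectors are coefficient
functions supported on I.  A left-invariant metric is given by its Gram matrix G
on the basis.\<close>

definition supp_in :: "'i set \<Rightarrow> ('i \<Rightarrow> real) \<Rightarrow> bool" where
  "supp_in I v \<longleftrightarrow> (\<forall>k. k \<notin> I \<longrightarrow> v k = 0)"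

definition bvec :: "'i \<Rightarrow> 'i \<Rightarrow> real" where
  "bvec a = (\<lambda>k. if k = a then 1 else 0)"

definition vbr :: "'i set \<Rightarrow> ('i \<Rightarrow> 'i \<Rightarrow> 'i \<Rightarrow> real)
    \<Rightarrow> ('i \<Rightarrow> real) \<Rightarrow> ('i \<Rightarrow> real) \<Rightarrow> 'i \<Rightarrow> real" where
  "vbr I br u v = (\<lambda>k. \<Sum>a\<in>I. \<Sum>b\<in>I. u a * v b * br a b k)"

definition ip :: "'i set \<Rightarrow> ('i \<Rightarrow> 'i \<Rightarrow> real) \<Rightarrow> ('i \<Rightarrow> real) \<Rightarrow> ('i \<Rightarrow> real) \<Rightarrow> real" where
  "ip I G u v = (\<Sum>a\<in>I. \<Sum>b\<in>I. u a * v b * G a b)"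

definition nondegenerate :: "'i set \<Rightarrow> ('i \<Rightarrow> 'i \<Rightarrow> real) \<Rightarrow> bool" where
  "nondegenerate I G \<longleftrightarrow>
     (\<forall>u. supp_in I u \<longrightarrow> (\<forall>z. supp_in I z \<longrightarrow> ip I G u z = 0) \<longrightarrow> u = (\<lambda>_. 0))"

text \<open>Levi-Civita connection of a left-invariant metric, via the Koszul formula
  2 g(nabla_u v, z) = g([u,v],z) - g([v,z],u) + g([z,u],v).\<close>

definition lc_conn :: "'i set \<Rightarrow> ('i \<Rightarrow> 'i \<Rightarrow> 'i \<Rightarrow> real) \<Rightarrow> ('i \<Rightarrow> 'i \<Rightarrow> real)
    \<Rightarrow> ('i \<Rightarrow> real) \<Rightarrow> ('i \<Rightarrow> real) \<Rightarrow> 'i \<Rightarrow> real" where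
  "lc_conn I br G u v = (THE w. supp_in I w \<and>
     (\<forall>z. supp_in I z \<longrightarrow> ip I G w z =
        (ip I G (vbr I br u v) z - ip I G (vbr I br v z) u + ip I G (vbr I br z u) v) / 2))"

definition curv :: "'i set \<Rightarrow> ('i \<Rightarrow> 'i \<Rightarrow> 'i \<Rightarrow> real) \<Rightarrow> ('i \<Rightarrow> 'i \<Rightarrow> real)
    \<Rightarrow> ('i \<Rightarrow> real) \<Rightarrow> ('i \<Rightarrow> real) \<Rightarrow> ('i \<Rightarrow> real) \<Rightarrow> 'i \<Rightarrow> real" where
  "curv I br G u v w = (\<lambda>k. lc_conn I br G u (lc_conn I br G v w) k
      - lc_conn I br G v (lc_conn I br G u w) k
      - lc_conn I br G (vbr I br u v) w k)"

definition Ric :: "'i set \<Rightarrow> ('i \<Rightarrow> 'i \<Rightarrow> 'i \<Rightarrow> real) \<Rightarrow> ('i \<Rightarrow> 'i \<Rightarrow> real)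
    \<Rightarrow> ('i \<Rightarrow> real) \<Rightarrow> ('i \<Rightarrow> real) \<Rightarrow> real" where
  "Ric I br G v w = (\<Sum>a\<in>I. curv I br G (bvec a) v w a)"

definition ric_op :: "'i set \<Rightarrow> ('i \<Rightarrow> 'i \<Rightarrow> 'i \<Rightarrow> real) \<Rightarrow> ('i \<Rightarrow> 'i \<Rightarrow> real)
    \<Rightarrow> ('i \<Rightarrow> real) \<Rightarrow> 'i \<Rightarrow> real" where
  "ric_op I br G v = (THE w. supp_in I w \<and>
     (\<forall>z. supp_in I z \<longrightarrow> ip I G w z = Ric I br G v z))"

text \<open>Linear maps are given by matrices on the basis: D k a is the e_k-coefficient of D(e_a).
  D is a derivation iff D[e_a,e_b] = [D e_a, e_b] + [e_a, D e_b] for all basis vectors.\<close>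

definition is_derivation :: "'i set \<Rightarrow> ('i \<Rightarrow> 'i \<Rightarrow> 'i \<Rightarrow> real) \<Rightarrow> ('i \<Rightarrow> 'i \<Rightarrow> real) \<Rightarrow> bool" where
  "is_derivation I br D \<longleftrightarrow> (\<forall>a\<in>I. \<forall>b\<in>I. \<forall>k\<in>I.
     (\<Sum>j\<in>I. D k j * br a b j) = (\<Sum>j\<in>I. D j a * br j b k) + (\<Sum>j\<in>I. D j b * br a j k))"

definition solvsoliton_eq :: "'i set \<Rightarrow> ('i \<Rightarrow> 'i \<Rightarrow> 'i \<Rightarrow> real) \<Rightarrow> ('i \<Rightarrow> 'i \<Rightarrow> real)
    \<Rightarrow> real \<Rightarrow> ('i \<Rightarrow> 'i \<Rightarrow> real) \<Rightarrow> bool" where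
  "solvsoliton_eq I br G c D \<longleftrightarrow> is_derivation I br D \<and>
     (\<forall>a\<in>I. \<forall>k\<in>I. ric_op I br G (bvec a) k = c * bvec a k + D k a)"

datatype osc_idx = P | X nat | Y nat | Q

definition osc_basis :: "nat \<Rightarrow> osc_idx set" where
  "osc_basis m = {P, Q} \<union> X ` {1..m} \<union> Y ` {1..m}"

fun osc_br :: "(nat \<Rightarrow> real) \<Rightarrow> osc_idx \<Rightarrow> osc_idx \<Rightarrow> osc_idx \<Rightarrow> real" where
  "osc_br lam (X i) (Y j) k = (if i = j \<and> k = P then 1 else 0)"
| "osc_br lam (Y j) (X i) k = (if i = j \<and> k = P then -1 else 0)"
| "osc_br lam Q (X j) k = (if k = Y j then lam j else 0)"
| "osc_br lam (X j) Q k = (if k = Y j then - lam j else 0)"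
| "osc_br lam Q (Y j) k = (if k = X j then - lam j else 0)"
| "osc_br lam (Y j) Q k = (if k = X j then lam j else 0)"
| "osc_br lam _ _ k = 0"

fun osc_metric :: "real \<Rightarrow> osc_idx \<Rightarrow> osc_idx \<Rightarrow> real" where
  "osc_metric eps P P = eps"
| "osc_metric eps Q Q = eps"
| "osc_metric eps P Q = 1"
| "osc_metric eps Q P = 1"
| "osc_metric eps (X i) (X j) = (if i = j then 1 else 0)"
| "osc_metric eps (Y i) (Y j) = (if i = j then 1 else 0)"
| "osc_metric eps _ _ = 0"

end

theory Submission
  imports Defs
begin

definition NG :: "'i set \<Rightarrow> ('i \<Rightarrow> 'i \<Rightarrow> 'i \<Rightarrow> real) \<Rightarrow> ('i \<Rightarrow> real) \<Rightarrow> ('i \<Rightarrow> real) \<Rightarrow> 'i \<Rightarrow> real" where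
  "NG I Gm u v = (\<lambda>k. \<Sum>a\<in>I. \<Sum>b\<in>I. u a * v b * Gm a b k)"

lemma ip_diff: "ip I G (\<lambda>k. x k - y k) z = ip I G x z - ip I G y z"
  unfolding ip_def by (simp add: algebra_simps sum_subtractf)

lemma the_eq:
  assumes nd: "nondegenerate I G" and w: "supp_in I w" and h: "\<forall>z. supp_in I z \<longrightarrow> ip I G w z = F z"
  shows "(THE w. supp_in I w \<and> (\<forall>z. supp_in I z \<longrightarrow> ip I G w z = F z)) = w"
proof (rule the_equality)
  show "supp_in I w \<and> (\<forall>z. supp_in I z \<longrightarrow> ip I G w z = F z)" using w h by blast
next
  fix w' assume a: "supp_in I w' \<and> (\<forall>z. supp_in I z \<longrightarrow> ip I G w' z = F z)"
  have s: "supp_in I (\<lambda>k. w' k - w k)" using a w by (simp add: supp_in_def)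
  have "\<forall>z. supp_in I z \<longrightarrow> ip I G (\<lambda>k. w' k - w k) z = 0"
    using a h by (simp add: ip_diff)
  then have "(\<lambda>k. w' k - w k) = (\<lambda>_. 0)" using nd s unfolding nondegenerate_def by blast
  then have "\<forall>k. w' k - w k = 0" by (metis)
  then show "w' = w" by (simp add: fun_eq_iff)
qed

definition tt :: "'i set \<Rightarrow> ('i \<Rightarrow> 'i \<Rightarrow> 'i \<Rightarrow> real) \<Rightarrow> ('i \<Rightarrow> 'i \<Rightarrow> real) \<Rightarrow> 'i \<Rightarrow> 'i \<Rightarrow> 'i \<Rightarrow> real" where
  "tt I br G a b c = (\<Sum>k\<in>I. br a b k * G k c)"

lemma ip_vbr: "ip I G (vbr I br u v) z = (\<Sum>a\<in>I. \<Sum>b\<in>I. \<Sum>c\<in>I. u a * v b * z c * tt I br G a b c)"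
proof -
  have "ip I G (vbr I br u v) z = (\<Sum>k\<in>I. \<Sum>c\<in>I. \<Sum>a\<in>I. \<Sum>b\<in>I. u a * v b * z c * (br a b k * G k c))"
    unfolding ip_def vbr_def by (simp add: sum_distrib_left sum_distrib_right mult_ac)
  also have "\<dots> = (\<Sum>c\<in>I. \<Sum>k\<in>I. \<Sum>a\<in>I. \<Sum>b\<in>I. u a * v b * z c * (br a b k * G k c))"
    by (rule sum.swap)
  also have "\<dots> = (\<Sum>c\<in>I. \<Sum>a\<in>I. \<Sum>k\<in>I. \<Sum>b\<in>I. u a * v b * z c * (br a b k * G k c))"
    by (rule sum.cong[OF refl], rule sum.swap)
  also have "\<dots> = (\<Sum>c\<in>I. \<Sum>a\<in>I. \<Sum>b\<in>I. \<Sum>k\<in>I. u a * v b * z c * (br a b k * G k c))"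
    by (rule sum.cong[OF refl], rule sum.cong[OF refl], rule sum.swap)
  also have "\<dots> = (\<Sum>a\<in>I. \<Sum>c\<in>I. \<Sum>b\<in>I. \<Sum>k\<in>I. u a * v b * z c * (br a b k * G k c))"
    by (rule sum.swap)
  also have "\<dots> = (\<Sum>a\<in>I. \<Sum>b\<in>I. \<Sum>c\<in>I. \<Sum>k\<in>I. u a * v b * z c * (br a b k * G k c))"
    by (rule sum.cong[OF refl], rule sum.swap)
  finally show ?thesis unfolding tt_def sum_distrib_left by simp
qed


lemma T3_lin: fixes u v z :: "'i \<Rightarrow> real" shows "(\<Sum>a\<in>I. \<Sum>b\<in>I. \<Sum>c\<in>I. u a * v b * z c * ((f a b c - g a b c + h a b c)/2))
  = ((\<Sum>a\<in>I. \<Sum>b\<in>I. \<Sum>c\<in>I. u a * v b * z c * f a b c) - (\<Sum>a\<in>I. \<Sum>b\<in>I. \<Sum>c\<in>I. u a * v b * z c * g a b c)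
     + (\<Sum>a\<in>I. \<Sum>b\<in>I. \<Sum>c\<in>I. u a * v b * z c * h a b c))/2"
proof -
  have "(\<Sum>a\<in>I. \<Sum>b\<in>I. \<Sum>c\<in>I. u a * v b * z c * ((f a b c - g a b c + h a b c)/2))
     = (\<Sum>a\<in>I. \<Sum>b\<in>I. \<Sum>c\<in>I. (u a * v b * z c * f a b c - u a * v b * z c * g a b c + u a * v b * z c * h a b c)/2)"
    by (intro sum.cong refl) (simp add: algebra_simps)
  also have "\<dots> = ((\<Sum>a\<in>I. \<Sum>b\<in>I. \<Sum>c\<in>I. u a * v b * z c * f a b c) - (\<Sum>a\<in>I. \<Sum>b\<in>I. \<Sum>c\<in>I. u a * v b * z c * g a b c)
     + (\<Sum>a\<in>I. \<Sum>b\<in>I. \<Sum>c\<in>I. u a * v b * z c * h a b c))/2"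
    by (simp only: sum_divide_distrib[symmetric] sum_subtractf sum.distrib)
  finally show ?thesis .
qed

lemma rot1: fixes u v z :: "'i \<Rightarrow> real" shows "(\<Sum>a\<in>I. \<Sum>b\<in>I. \<Sum>c\<in>I. v a * z b * u c * t a b c) = (\<Sum>a\<in>I. \<Sum>b\<in>I. \<Sum>c\<in>I. u a * v b * z c * t b c a)"
proof -
  have "(\<Sum>a\<in>I. \<Sum>b\<in>I. \<Sum>c\<in>I. v a * z b * u c * t a b c) = (\<Sum>a\<in>I. \<Sum>c\<in>I. \<Sum>b\<in>I. v a * z b * u c * t a b c)"
    by (rule sum.cong[OF refl], rule sum.swap)
  also have "\<dots> = (\<Sum>c\<in>I. \<Sum>a\<in>I. \<Sum>b\<in>I. v a * z b * u c * t a b c)" by (rule sum.swap)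
  finally show ?thesis by (simp add: mult_ac)
qed

lemma rot2: fixes u v z :: "'i \<Rightarrow> real" shows "(\<Sum>a\<in>I. \<Sum>b\<in>I. \<Sum>c\<in>I. z a * u b * v c * t a b c) = (\<Sum>a\<in>I. \<Sum>b\<in>I. \<Sum>c\<in>I. u a * v b * z c * t c a b)"
proof -
  have "(\<Sum>a\<in>I. \<Sum>b\<in>I. \<Sum>c\<in>I. z a * u b * v c * t a b c) = (\<Sum>b\<in>I. \<Sum>a\<in>I. \<Sum>c\<in>I. z a * u b * v c * t a b c)"
    by (rule sum.swap)
  also have "\<dots> = (\<Sum>b\<in>I. \<Sum>c\<in>I. \<Sum>a\<in>I. z a * u b * v c * t a b c)"
    by (rule sum.cong[OF refl], rule sum.swap)
  finally show ?thesis by (simp add: mult_ac)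
qed

lemma lc_conn_eq:
  assumes nd: "nondegenerate I G"
    and supp: "\<forall>a\<in>I. \<forall>b\<in>I. supp_in I (Gm a b)"
    and kz: "\<forall>a\<in>I. \<forall>b\<in>I. \<forall>c\<in>I. tt I Gm G a b c = (tt I br G a b c - tt I br G b c a + tt I br G c a b)/2"
  shows "lc_conn I br G u v = vbr I Gm u v"
  unfolding lc_conn_def
proof (rule the_eq[OF nd])
  show "supp_in I (vbr I Gm u v)" using supp unfolding supp_in_def vbr_def by simp
  show "\<forall>z. supp_in I z \<longrightarrow> ip I G (vbr I Gm u v) z =
       (ip I G (vbr I br u v) z - ip I G (vbr I br v z) u + ip I G (vbr I br z u) v) / 2"
  proof (intro allI impI)
    fix z
    have e1: "ip I G (vbr I br v z) u = (\<Sum>a\<in>I. \<Sum>b\<in>I. \<Sum>c\<in>I. u a * v b * z c * tt I br G b c a)"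
      unfolding ip_vbr by (rule rot1)
    have e2: "ip I G (vbr I br z u) v = (\<Sum>a\<in>I. \<Sum>b\<in>I. \<Sum>c\<in>I. u a * v b * z c * tt I br G c a b)"
      unfolding ip_vbr by (rule rot2)
    have "ip I G (vbr I Gm u v) z = (\<Sum>a\<in>I. \<Sum>b\<in>I. \<Sum>c\<in>I. u a * v b * z c * ((tt I br G a b c - tt I br G b c a + tt I br G c a b)/2))"
      unfolding ip_vbr using kz by (intro sum.cong refl) simp
    also have "\<dots> = (ip I G (vbr I br u v) z - ip I G (vbr I br v z) u + ip I G (vbr I br z u) v) / 2"
      apply (subst e1, subst e2)
      apply (simp only: T3_lin ip_vbr)
      done
    finally show "ip I G (vbr I Gm u v) z =
       (ip I G (vbr I br u v) z - ip I G (vbr I br v z) u + ip I G (vbr I br z u) v) / 2" .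
  qed
qed

lemma mult_if0 [simp]: "(a::real) * (if Pr then b else 0) = (if Pr then a * b else 0)"
  "(if Pr then b else 0) * (a::real) = (if Pr then b * a else 0)" by auto

lemma sum_bvec: "finite I \<Longrightarrow> d \<in> I \<Longrightarrow> (\<Sum>b\<in>I. f b * bvec d b) = f d"
  unfolding bvec_def by (simp add: if_distrib[of "\<lambda>x. _ * x"] sum.delta cong: if_cong)

lemma vbr_lin2: "finite I \<Longrightarrow> vbr I B x z k = (\<Sum>d\<in>I. z d * vbr I B x (bvec d) k)"
proof -
  assume f: "finite I"
  have "(\<Sum>d\<in>I. z d * vbr I B x (bvec d) k) = (\<Sum>d\<in>I. \<Sum>a\<in>I. z d * x a * B a d k)"
    unfolding vbr_def
    by (intro sum.cong refl) (simp add: sum_distrib_left bvec_def f mult_ac cong: if_cong)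
  also have "\<dots> = (\<Sum>a\<in>I. \<Sum>d\<in>I. z d * x a * B a d k)" by (rule sum.swap)
  finally show ?thesis unfolding vbr_def by (simp add: mult_ac)
qed

lemma vbr_lin2': "vbr I B u (\<lambda>k. \<Sum>d\<in>I. z d * W d k) k = (\<Sum>d\<in>I. z d * vbr I B u (W d) k)"
proof -
  have "vbr I B u (\<lambda>k. \<Sum>d\<in>I. z d * W d k) k = (\<Sum>a\<in>I. \<Sum>b\<in>I. \<Sum>d\<in>I. z d * (u a * W d b * B a b k))"
    unfolding vbr_def by (simp add: sum_distrib_left sum_distrib_right mult_ac)
  also have "\<dots> = (\<Sum>a\<in>I. \<Sum>d\<in>I. \<Sum>b\<in>I. z d * (u a * W d b * B a b k))"
    by (rule sum.cong[OF refl], rule sum.swap)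
  also have "\<dots> = (\<Sum>d\<in>I. \<Sum>a\<in>I. \<Sum>b\<in>I. z d * (u a * W d b * B a b k))" by (rule sum.swap)
  finally show ?thesis unfolding vbr_def by (simp add: sum_distrib_left)
qed


lemma curv_lin:
  assumes lc: "\<And>u v. lc_conn I br G u v = vbr I Gm u v" and f: "finite I"
  shows "curv I br G x y z k = (\<Sum>d\<in>I. z d * curv I br G x y (bvec d) k)"
proof -
  have a: "vbr I Gm y z = (\<lambda>k. \<Sum>d\<in>I. z d * vbr I Gm y (bvec d) k)" for y
    by (rule ext, rule vbr_lin2[OF f])
  show ?thesis unfolding curv_def lc a vbr_lin2' 
    by (simp add: sum_subtractf sum.distrib algebra_simps)
qed

lemma Ric_lin:
  assumes lc: "\<And>u v. lc_conn I br G u v = vbr I Gm u v" and f: "finite I"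
  shows "Ric I br G v z = (\<Sum>d\<in>I. z d * Ric I br G v (bvec d))"
proof -
  have "Ric I br G v z = (\<Sum>a\<in>I. \<Sum>d\<in>I. z d * curv I br G (bvec a) v (bvec d) a)"
    unfolding Ric_def by (subst curv_lin[OF lc f]) simp
  also have "\<dots> = (\<Sum>d\<in>I. \<Sum>a\<in>I. z d * curv I br G (bvec a) v (bvec d) a)" by (rule sum.swap)
  finally show ?thesis unfolding Ric_def by (simp add: sum_distrib_left)
qed

lemma ip_lin: "finite I \<Longrightarrow> ip I G w z = (\<Sum>d\<in>I. z d * ip I G w (bvec d))"
proof -
  assume f: "finite I"
  have "(\<Sum>d\<in>I. z d * ip I G w (bvec d)) = (\<Sum>d\<in>I. \<Sum>a\<in>I. w a * z d * G a d)"
    unfolding ip_def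
    by (intro sum.cong refl) (simp add: sum_distrib_left bvec_def f mult_ac cong: if_cong)
  also have "\<dots> = (\<Sum>a\<in>I. \<Sum>d\<in>I. w a * z d * G a d)" by (rule sum.swap)
  finally show ?thesis unfolding ip_def by simp
qed

lemma ric_op_eq:
  assumes nd: "nondegenerate I G" and f: "finite I"
    and lc: "\<And>u v. lc_conn I br G u v = vbr I Gm u v"
    and w: "supp_in I w" and h: "\<forall>d\<in>I. ip I G w (bvec d) = Ric I br G v (bvec d)"
  shows "ric_op I br G v = w"
  unfolding ric_op_def
proof (rule the_eq[OF nd w], intro allI impI)
  fix z
  show "ip I G w z = Ric I br G v z"
    unfolding ip_lin[OF f, of G w z] Ric_lin[OF lc f, of v z] using h by simp
qed


lemma osc_basis_eq: "osc_basis m = insert P (insert Q (X ` {1..m} \<union> Y ` {1..m}))"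
  unfolding osc_basis_def by auto

lemma finite_osc [simp]: "finite (osc_basis m)"
  unfolding osc_basis_def by simp

lemma mem_osc [simp]: "P \<in> osc_basis m" "Q \<in> osc_basis m"
  "X i \<in> osc_basis m \<longleftrightarrow> 1 \<le> i \<and> i \<le> m" "Y i \<in> osc_basis m \<longleftrightarrow> 1 \<le> i \<and> i \<le> m"
  unfolding osc_basis_def by auto

lemma sum_osc: "sum f (osc_basis m) = f P + f Q + (\<Sum>i=1..m. f (X i)) + (\<Sum>i=1..m. f (Y i))"
proof -
  have d: "(X ` {1..m}) \<inter> (Y ` {1..m}) = {}" by auto
  have "sum f (X ` {1..m} \<union> Y ` {1..m}) = sum f (X ` {1..m}) + sum f (Y ` {1..m})"
    by (rule sum.union_disjoint) (auto)
  also have "\<dots> = (\<Sum>i=1..m. f (X i)) + (\<Sum>i=1..m. f (Y i))"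
    by (simp add: sum.reindex inj_on_def)
  finally have e: "sum f (X ` {1..m} \<union> Y ` {1..m}) = (\<Sum>i=1..m. f (X i)) + (\<Sum>i=1..m. f (Y i))" .
  have "sum f (osc_basis m) = f P + (f Q + sum f (X ` {1..m} \<union> Y ` {1..m}))"
    unfolding osc_basis_eq by (subst sum.insert, auto)+
  then show ?thesis using e by (simp add: add_ac)
qed

fun Gam :: "real \<Rightarrow> (nat \<Rightarrow> real) \<Rightarrow> osc_idx \<Rightarrow> osc_idx \<Rightarrow> osc_idx \<Rightarrow> real" where
  "Gam eps lam P (X j) k = (if k = Y j then - eps/2 else 0)"
| "Gam eps lam P (Y j) k = (if k = X j then eps/2 else 0)"
| "Gam eps lam (X j) P k = (if k = Y j then - eps/2 else 0)"
| "Gam eps lam (Y j) P k = (if k = X j then eps/2 else 0)"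
| "Gam eps lam (X i) (Y j) k = (if i = j \<and> k = P then 1/2 else 0)"
| "Gam eps lam (Y i) (X j) k = (if i = j \<and> k = P then -1/2 else 0)"
| "Gam eps lam (X i) Q k = (if k = Y i then -1/2 else 0)"
| "Gam eps lam Q (X i) k = (if k = Y i then lam i - 1/2 else 0)"
| "Gam eps lam (Y i) Q k = (if k = X i then 1/2 else 0)"
| "Gam eps lam Q (Y i) k = (if k = X i then 1/2 - lam i else 0)"
| "Gam eps lam _ _ k = 0"

definition lowf :: "real \<Rightarrow> (osc_idx \<Rightarrow> real) \<Rightarrow> osc_idx \<Rightarrow> real" where
  "lowf eps f c = (case c of P \<Rightarrow> eps * f P + f Q | Q \<Rightarrow> f P + eps * f Q | X i \<Rightarrow> f (X i) | Y i \<Rightarrow> f (Y i))"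

lemma lower: "c \<in> osc_basis m \<Longrightarrow> (\<Sum>d\<in>osc_basis m. f d * osc_metric eps d c) = lowf eps f c"
  unfolding lowf_def sum_osc by (cases c) (auto simp: if_distrib cong: if_cong)


lemma tt_osc: "c \<in> osc_basis m \<Longrightarrow> tt (osc_basis m) B (osc_metric eps) a b c = lowf eps (B a b) c"
  unfolding tt_def by (rule lower)

lemma kosz_pt: "lowf eps (Gam eps lam a b) c = (lowf eps (osc_br lam a b) c - lowf eps (osc_br lam b c) a + lowf eps (osc_br lam c a) b)/2"
  by (cases a; cases b; cases c) (auto simp: lowf_def)

lemma kosz: "\<forall>a\<in>osc_basis m. \<forall>b\<in>osc_basis m. \<forall>c\<in>osc_basis m.
  tt (osc_basis m) (Gam eps lam) (osc_metric eps) a b c =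
   (tt (osc_basis m) (osc_br lam) (osc_metric eps) a b c - tt (osc_basis m) (osc_br lam) (osc_metric eps) b c a
    + tt (osc_basis m) (osc_br lam) (osc_metric eps) c a b)/2"
  by (simp add: tt_osc kosz_pt)

lemma supp_Gam: "\<forall>a\<in>osc_basis m. \<forall>b\<in>osc_basis m. supp_in (osc_basis m) (Gam eps lam a b)"
  unfolding supp_in_def
  apply (intro ballI allI impI)
  subgoal for a b k by (cases a; cases b; cases k) auto
  done



lemma sum_if_const: "(\<Sum>b\<in>I. if Pr then f b else (0::real)) = (if Pr then (\<Sum>b\<in>I. f b) else 0)"
  by simp

lemma vbr_b1: "finite I \<Longrightarrow> a \<in> I \<Longrightarrow> vbr I B (bvec a) w k = (\<Sum>b\<in>I. w b * B a b k)"
  unfolding vbr_def bvec_def by (simp add: sum_if_const sum.delta cong: if_cong)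

lemma vbr_b2: "finite I \<Longrightarrow> b \<in> I \<Longrightarrow> vbr I B x (bvec b) k = (\<Sum>a\<in>I. x a * B a b k)"
  unfolding vbr_def bvec_def by (simp add: sum.delta cong: if_cong)

lemma sum_bvec2: "finite I \<Longrightarrow> d \<in> I \<Longrightarrow> (\<Sum>b\<in>I. bvec d b * f b) = f d"
  unfolding bvec_def by (simp add: sum.delta cong: if_cong)

lemma vbr_bb: "finite I \<Longrightarrow> a \<in> I \<Longrightarrow> b \<in> I \<Longrightarrow> vbr I B (bvec a) (bvec b) = B a b"
  by (rule ext) (simp add: vbr_b1 sum_bvec2)

lemma Ric_basis:
  assumes lc: "\<And>u v. lc_conn I br G u v = vbr I Gm u v" and f: "finite I" and v: "v \<in> I" and c: "c \<in> I"
  shows "Ric I br G (bvec v) (bvec c) = (\<Sum>a\<in>I. (\<Sum>b\<in>I. Gm v c b * Gm a b a) - (\<Sum>b\<in>I. Gm a c b * Gm v b a)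
      - (\<Sum>x\<in>I. br a v x * Gm x c a))"
  unfolding Ric_def curv_def lc
  by (intro sum.cong refl) (simp add: vbr_bb vbr_b1 vbr_b2 f v c)

definition RicV :: "nat \<Rightarrow> real \<Rightarrow> osc_idx \<Rightarrow> osc_idx \<Rightarrow> real" where
  "RicV m eps v c = (case (v, c) of (P, P) \<Rightarrow> m * eps^2/2 | (P, Q) \<Rightarrow> m * eps/2 | (Q, P) \<Rightarrow> m*eps/2
     | (Q, Q) \<Rightarrow> m/2 | (X i, X j) \<Rightarrow> (if i = j then -eps/2 else 0) | (Y i, Y j) \<Rightarrow> (if i = j then -eps/2 else 0)
     | _ \<Rightarrow> 0)"

lemma sum_cong_ival: "a = a' \<Longrightarrow> b = b' \<Longrightarrow> (\<And>x. a' \<le> x \<Longrightarrow> x \<le> b' \<Longrightarrow> f x = g x) \<Longrightarrow> sum f {a..b} = sum g {a'..b'}"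
  by (auto intro: sum.cong)

definition RicF :: "nat \<Rightarrow> real \<Rightarrow> (nat \<Rightarrow> real) \<Rightarrow> osc_idx \<Rightarrow> osc_idx \<Rightarrow> real" where
  "RicF m eps lam v c = (\<Sum>a\<in>osc_basis m. (\<Sum>b\<in>osc_basis m. Gam eps lam v c b * Gam eps lam a b a) - (\<Sum>b\<in>osc_basis m. Gam eps lam a c b * Gam eps lam v b a)
      - (\<Sum>x\<in>osc_basis m. osc_br lam a v x * Gam eps lam x c a))"

lemma RicF_PP: "RicF m eps lam P P = RicV m eps P P"
  unfolding RicV_def RicF_def by (simp add: sum_osc power2_eq_square algebra_simps sum.distrib sum_subtractf sum_negf sum_distrib_left[symmetric] sum_divide_distrib[symmetric] cong: sum_cong_ival if_cong)
lemma RicF_PQ: "RicF m eps lam P Q = RicV m eps P Q"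
  unfolding RicV_def RicF_def by (simp add: sum_osc power2_eq_square algebra_simps sum.distrib sum_subtractf sum_negf sum_distrib_left[symmetric] sum_divide_distrib[symmetric] cong: sum_cong_ival if_cong)
lemma RicF_QP: "RicF m eps lam Q P = RicV m eps Q P"
  unfolding RicV_def RicF_def by (simp add: sum_osc power2_eq_square algebra_simps sum.distrib sum_subtractf sum_negf sum_distrib_left[symmetric] sum_divide_distrib[symmetric] cong: sum_cong_ival if_cong)
lemma RicF_QQ: "RicF m eps lam Q Q = RicV m eps Q Q"
  unfolding RicV_def RicF_def by (simp add: sum_osc power2_eq_square algebra_simps sum.distrib sum_subtractf sum_negf sum_distrib_left[symmetric] sum_divide_distrib[symmetric] cong: sum_cong_ival if_cong)
lemma RicF_XX: "1 \<le> i \<Longrightarrow> i \<le> m \<Longrightarrow> 1 \<le> j \<Longrightarrow> j \<le> m \<Longrightarrow> RicF m eps lam (X i) (X j) = RicV m eps (X i) (X j)"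
  unfolding RicV_def RicF_def by (simp add: sum_osc power2_eq_square algebra_simps sum.distrib sum_subtractf sum_negf sum_distrib_left[symmetric] sum_divide_distrib[symmetric] cong: sum_cong_ival if_cong)


lemma RicF_all: "v \<in> osc_basis m \<Longrightarrow> c \<in> osc_basis m \<Longrightarrow> RicF m eps lam v c = RicV m eps v c"
  unfolding RicV_def RicF_def
  by (cases v; cases c) (simp_all add: sum_osc power2_eq_square algebra_simps sum.distrib sum_subtractf sum_negf sum_distrib_left[symmetric] sum_divide_distrib[symmetric] cong: sum_cong_ival if_cong)


definition rv :: "real \<Rightarrow> nat \<Rightarrow> osc_idx \<Rightarrow> osc_idx \<Rightarrow> real" where
  "rv eps m v = (\<lambda>k. case v of P \<Rightarrow> (if k = P then m*eps/2 else 0) | Q \<Rightarrow> (if k = P then m/2 else 0)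
     | X i \<Rightarrow> (if k = X i then -eps/2 else 0) | Y i \<Rightarrow> (if k = Y i then -eps/2 else 0))"

lemma ip_bvec: "finite I \<Longrightarrow> d \<in> I \<Longrightarrow> ip I G w (bvec d) = (\<Sum>a\<in>I. w a * G a d)"
  unfolding ip_def by (intro sum.cong refl) (simp add: bvec_def sum.delta cong: if_cong)

lemma rv_low: "lowf eps (rv eps m v) d = RicV m eps v d"
  unfolding lowf_def rv_def RicV_def by (cases v; cases d) (simp_all add: power2_eq_square)

lemma supp_rv: "v \<in> osc_basis m \<Longrightarrow> supp_in (osc_basis m) (rv eps m v)"
  unfolding supp_in_def rv_def by (cases v) auto

lemma ric_osc:
  assumes nd: "nondegenerate (osc_basis m) (osc_metric eps)" and v: "v \<in> osc_basis m"
  shows "ric_op (osc_basis m) (osc_br lam) (osc_metric eps) (bvec v) = rv eps m v"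
proof -
  have lc: "\<And>u v. lc_conn (osc_basis m) (osc_br lam) (osc_metric eps) u v = vbr (osc_basis m) (Gam eps lam) u v"
    by (rule lc_conn_eq[OF nd supp_Gam kosz])
  show ?thesis
  proof (rule ric_op_eq[OF nd finite_osc lc supp_rv[OF v]], intro ballI)
    fix d assume d: "d \<in> osc_basis m"
    have "ip (osc_basis m) (osc_metric eps) (rv eps m v) (bvec d) = RicV m eps v d"
      by (simp add: ip_bvec d lower rv_low)
    also have "\<dots> = RicF m eps lam v d" using RicF_all[OF v d] by simp
    also have "\<dots> = Ric (osc_basis m) (osc_br lam) (osc_metric eps) (bvec v) (bvec d)"
      unfolding RicF_def by (rule Ric_basis[OF lc finite_osc v d, symmetric])
    finally show "ip (osc_basis m) (osc_metric eps) (rv eps m v) (bvec d) = Ric (osc_basis m) (osc_br lam) (osc_metric eps) (bvec v) (bvec d)" .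
  qed
qed

theorem mainTheorem3:
  fixes m :: nat and lam :: "nat \<Rightarrow> real" and eps c :: real
    and D :: "osc_idx \<Rightarrow> osc_idx \<Rightarrow> real"
  assumes "m \<ge> 1"
    and "\<forall>j\<in>{1..m}. lam j \<noteq> 0"
    and "nondegenerate (osc_basis m) (osc_metric eps)"
    and "solvsoliton_eq (osc_basis m) (osc_br lam) (osc_metric eps) c D"
  shows "eps = 0 \<and> c = 0 \<and> D P Q = real m / 2 \<and> D P P = 0
    \<and> (\<forall>j\<in>{1..m}. D P (X j) = 0 \<and> D P (Y j) = 0)
    \<and> (\<forall>i\<in>{1..m}. \<forall>j\<in>{1..m}. D (X i) (X j) = 0 \<and> D (Y i) (X j) = 0)
    \<and> solvsoliton_eq (osc_basis m) (osc_br lam) (osc_metric 0) 0 D"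
proof -
  note m = assms(1) and lam = assms(2) and nd = assms(3)
  have der: "is_derivation (osc_basis m) (osc_br lam) D" and
    sol0: "\<forall>a\<in>osc_basis m. \<forall>k\<in>osc_basis m. ric_op (osc_basis m) (osc_br lam) (osc_metric eps) (bvec a) k = c * bvec a k + D k a"
    using assms(4) unfolding solvsoliton_eq_def by auto
  have sol: "rv eps m a k = c * bvec a k + D k a" if "a \<in> osc_basis m" "k \<in> osc_basis m" for a k
  proof -
    have "ric_op (osc_basis m) (osc_br lam) (osc_metric eps) (bvec a) k = c * bvec a k + D k a"
      using sol0 that by blast
    then show ?thesis unfolding ric_osc[OF nd that(1), of lam] .
  qed
  have h1: "m*eps/2 = c + D P P" using sol[of P P] by (simp add: rv_def bvec_def)
  have h2: "0 = c + D Q Q" using sol[of Q Q] by (simp add: rv_def bvec_def)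
  have h3: "-eps/2 = c + D (X 1) (X 1)" using sol[of "X 1" "X 1"] m by (simp add: rv_def bvec_def)
  have h4: "-eps/2 = c + D (Y 1) (Y 1)" using sol[of "Y 1" "Y 1"] m by (simp add: rv_def bvec_def)
  have X1: "X 1 \<in> osc_basis m" "Y 1 \<in> osc_basis m" using m by auto
  have e1: "(\<Sum>j\<in>osc_basis m. D P j * osc_br lam (X 1) (Y 1) j) = (\<Sum>j\<in>osc_basis m. D j (X 1) * osc_br lam j (Y 1) P) + (\<Sum>j\<in>osc_basis m. D j (Y 1) * osc_br lam (X 1) j P)"
    using der X1 unfolding is_derivation_def by (meson mem_osc(1))
  have d1: "D P P = D (X 1) (X 1) + D (Y 1) (Y 1)"
    using e1 m by (simp add: sum_osc cong: sum_cong_ival if_cong)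
  have e2: "(\<Sum>j\<in>osc_basis m. D (Y 1) j * osc_br lam Q (X 1) j) = (\<Sum>j\<in>osc_basis m. D j Q * osc_br lam j (X 1) (Y 1)) + (\<Sum>j\<in>osc_basis m. D j (X 1) * osc_br lam Q j (Y 1))"
    using der X1 unfolding is_derivation_def by (meson mem_osc(2))
  have d2: "lam 1 * D (Y 1) (Y 1) = lam 1 * D Q Q + lam 1 * D (X 1) (X 1)"
    using e2 m by (simp add: sum_osc mult.commute cong: sum_cong_ival if_cong)
  have l1: "lam 1 \<noteq> 0" using lam m by auto
  from d2 l1 have "D (Y 1) (Y 1) = D Q Q + D (X 1) (X 1)" by (simp add: distrib_left[symmetric])
  then have c0: "c = 0" using h2 h3 h4 by linarith
  have "m * eps / 2 = - eps" using h1 h3 h4 d1 c0 by linarith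
  then have "eps * (m + 2) = 0" by (simp add: field_simps)
  then have e0: "eps = 0" by simp
  show ?thesis
  proof (intro conjI ballI)
    show "eps = 0" by (rule e0)
    show "c = 0" by (rule c0)
    show "D P Q = real m / 2" using sol[of Q P] by (simp add: rv_def bvec_def)
    show "D P P = 0" using h1 c0 e0 by simp
    fix j assume j: "j \<in> {1..m}"
    show "D P (X j) = 0" using sol[of "X j" P] j by (simp add: rv_def bvec_def)
    show "D P (Y j) = 0" using sol[of "Y j" P] j by (simp add: rv_def bvec_def)
  next
    fix i j assume i: "i \<in> {1..m}" and j: "j \<in> {1..m}"
    show "D (X i) (X j) = 0" using sol[of "X j" "X i"] i j c0 e0 by (simp add: rv_def bvec_def split: if_splits)
    show "D (Y i) (X j) = 0" using sol[of "X j" "Y i"] i j c0 e0 by (simp add: rv_def bvec_def)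
  next
    show "solvsoliton_eq (osc_basis m) (osc_br lam) (osc_metric 0) 0 D"
      using assms(4) c0 e0 by simp
  qed
qed

end
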